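(* There is an infinite set $A_0\subset\mathbb{N}_0$ such that $A_0^2+A_0=\mathbb{N}_0$ and $$\liminf_{X\to\infty}\frac{A_0(X)}{(X\log X)^{1/3}}<\infty.$$
   Context: $\mathbb{N}_0$ is the set of nonnegative integers; $A_0^2=\{ab:a,b\in A_0\}$, $A_0^2+A_0=\{x+y:x\in A_0^2,y\in A_0\}$; $A_0(X)=|A_0\cap[1,X]|$. *)

theory Defs
  imports "HOL-Analysis.Analysis"
begin

definition prodset :: "nat set \<Rightarrow> nat set" where
  "prodset A = {a * b | a b. a \<in> A \<and> b \<in> A}"

definition sumset :: "nat set \<Rightarrow> nat set \<Rightarrow> nat set" where
  "sumset B C = {x + y | x y. x \<in> B \<and> y \<in> C}"

definition counting :: "nat set \<Rightarrow> real \<Rightarrow> nat" where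
  "counting A X = card {a \<in> A. 1 \<le> a \<and> real a \<le> X}"

end

theory Submission
  imports Defs
begin

lemma block_prod:
  fixes w v bt p :: nat
  assumes "w \<le> v * bt" "w * bt \<le> p" "p < (w + v) * (2*bt)" "bt > 0"
  shows "\<exists>a b. w \<le> a \<and> a < w + v \<and> bt \<le> b \<and> b \<le> 2*bt \<and> a*b \<le> p \<and> p < a*b + 2*bt"
proof -
  have w0: "w > 0 \<or> w = 0" by auto
  define b where "b = min (2*bt) (p div w)"
  show ?thesis
  proof (cases "w = 0")
    case True
    have "p div (2*bt) < v" using assms True
      by (simp add: div_less_iff_less_mult mult.commute)
    moreover have "(p div (2*bt)) * (2*bt) \<le> p" by simp
    moreover have "p < (p div (2*bt)) * (2*bt) + 2*bt"
      by (metis assms(4) div_mult_mod_eq add_less_cancel_left mod_less_divisor nat_0_less_mult_iff zero_less_numeral)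
    ultimately show ?thesis using True assms(4) by (intro exI[of _ "p div (2*bt)"] exI[of _ "2*bt"]) auto
  next
    case False
    have bge: "bt \<le> b" unfolding b_def using assms False
      by (simp add: less_eq_div_iff_mult_less_eq mult.commute)
    have ble: "b \<le> 2*bt" unfolding b_def by simp
    have wb: "w * b \<le> p" unfolding b_def using False
      by (metis min.cobounded2 mult.commute order.trans dividend_less_div_times less_or_eq_imp_le
          div_times_less_eq_dividend mult_le_mono2)
    have pl: "p < (w + v) * b"
    proof (cases "2*bt \<le> p div w")
      case True then show ?thesis using assms unfolding b_def by simp
    next
      case F: False
      then have bb: "b = p div w" unfolding b_def by simp
      have "p < w * (p div w) + w" using False
        by (metis div_mult_mod_eq add_less_cancel_left mod_less_divisor mult.commute not_gr_zero)
      moreover have "w \<le> v * b" using assms(1) bge by (meson le_trans mult_le_mono2)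
      ultimately have "p < w * b + v * b" unfolding bb by linarith
      then show ?thesis by (simp add: algebra_simps)
    qed
    have b0: "b > 0" using bge assms(4) by simp
    define a where "a = p div b"
    have "w \<le> a" unfolding a_def using wb b0 by (simp add: less_eq_div_iff_mult_less_eq)
    moreover have "a < w + v" unfolding a_def using pl b0 by (simp add: div_less_iff_less_mult)
    moreover have "a * b \<le> p" unfolding a_def by simp
    moreover have "p < a*b + 2*bt"
    proof -
      have "p < a*b + b" unfolding a_def using b0
        by (metis div_mult_mod_eq add_less_cancel_left mod_less_divisor)
      then show ?thesis using ble by simp
    qed
    ultimately show ?thesis using bge ble by blast
  qed
qed

locale scl =
  fixes A :: "nat set" and L bt e :: nat
  assumes bt: "bt = 2^e" and Lb: "(L+1)^2 \<le> bt" and A0: "0 \<in> A"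
    and Aint: "\<And>x. L < x \<Longrightarrow> x \<le> 4*bt \<Longrightarrow> x \<in> A"
    and Ablk: "\<And>i x. i \<le> e \<Longrightarrow> 2^i*bt \<le> x \<Longrightarrow> x < 2^i*(bt+1) \<Longrightarrow> x \<in> A"
begin

lemma L_lt: "L < bt"
proof -
  have "L + 1 \<le> (L+1)^2" by (simp add: power2_eq_square)
  then show ?thesis using Lb by linarith
qed

lemma bt_pos: "bt > 0" using L_lt by simp

lemma blk1:
  assumes "i \<le> e" "2^i*bt^2 \<le> p" "p < 2^(i+1)*bt*(bt+1)"
  shows "\<exists>a\<in>A. \<exists>b\<in>A. a*b \<le> p \<and> p < a*b + 2*bt"
proof -
  have "\<exists>a b. 2^i*bt \<le> a \<and> a < 2^i*bt + 2^i \<and> bt \<le> b \<and> b \<le> 2*bt \<and> a*b \<le> p \<and> p < a*b + 2*bt"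
    using assms bt_pos by (intro block_prod) (auto simp: power2_eq_square algebra_simps)
  then obtain a b where ab: "2^i*bt \<le> a" "a < 2^i*bt + 2^i" "bt \<le> b" "b \<le> 2*bt" "a*b \<le> p" "p < a*b + 2*bt"
    by blast
  have "a \<in> A" using Ablk[OF assms(1) ab(1)] ab(2) by (simp add: algebra_simps)
  moreover have "b \<in> A" using Aint ab(3,4) L_lt by simp
  ultimately show ?thesis using ab by blast
qed

lemma blk_all:
  "i \<le> e \<Longrightarrow> bt^2 \<le> p \<Longrightarrow> p < 2^(i+1)*bt*(bt+1) \<Longrightarrow> \<exists>a\<in>A. \<exists>b\<in>A. a*b \<le> p \<and> p < a*b + 2*bt"
proof (induction i arbitrary: p)
  case 0
  then show ?case using blk1[of 0 p] by simp
next
  case (Suc i)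
  show ?case
  proof (cases "p < 2^(i+1)*bt*(bt+1)")
    case True
    then show ?thesis using Suc by simp
  next
    case False
    have "2^(Suc i)*bt^2 \<le> 2^(i+1)*bt*(bt+1)" by (simp add: power2_eq_square algebra_simps)
    then show ?thesis using False Suc.prems blk1[of "Suc i" p] by simp
  qed
qed

lemma prod_cover:
  assumes "p < bt^3"
  shows "\<exists>a\<in>A. \<exists>b\<in>A. a*b \<le> p \<and> p < a*b + 2*bt"
proof -
  have L1: "(L+1)*(L+1) \<le> bt" using Lb by (simp add: power2_eq_square)
  consider "p < 2*bt" | "2*bt \<le> p" "p < (L+1)*(2*bt)" | "(L+1)*(2*bt) \<le> p" "p < bt^2" | "bt^2 \<le> p"
    by linarith
  then show ?thesis
  proof cases
    case 1
    then show ?thesis using A0 by force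
  next
    case 2
    define b where "b = p div (L+1)"
    have "L + 1 \<le> b" unfolding b_def using 2 L1
      by (simp add: less_eq_div_iff_mult_less_eq)
    moreover have "b < 2*bt" unfolding b_def using 2
      by (simp add: div_less_iff_less_mult mult.commute)
    moreover have "p < (L+1)*b + (L+1)" unfolding b_def
      by (metis div_mult_mod_eq add_less_cancel_left mod_less_divisor zero_less_Suc add.commute plus_1_eq_Suc mult.commute)
    moreover have "(L+1)*b \<le> p" unfolding b_def by (rule times_div_less_eq_dividend)
    ultimately show ?thesis using Aint L_lt
      by (intro bexI[of _ "L+1"] bexI[of _ b]) auto
  next
    case 3
    define a where "a = p div (2*bt)"
    have "L + 1 \<le> a" unfolding a_def using 3 bt_pos
      by (simp add: less_eq_div_iff_mult_less_eq)
    moreover have "a < bt" unfolding a_def using 3 bt_pos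
      by (simp add: div_less_iff_less_mult power2_eq_square)
    moreover have "p < a*(2*bt) + 2*bt" unfolding a_def using bt_pos
      by (metis div_mult_mod_eq add_less_cancel_left mod_less_divisor nat_0_less_mult_iff zero_less_numeral)
    moreover have "a*(2*bt) \<le> p" unfolding a_def by simp
    ultimately show ?thesis using Aint L_lt
      by (intro bexI[of _ a] bexI[of _ "2*bt"]) auto
  next
    case 4
    have "bt^3 \<le> 2^(e+1)*bt*(bt+1)" using bt by (simp add: power2_eq_square power3_eq_cube algebra_simps)
    then show ?thesis using blk_all[of e p] 4 assms by simp
  qed
qed

lemma cover:
  assumes "L < n" "n \<le> bt^3"
  shows "\<exists>a\<in>A. \<exists>b\<in>A. \<exists>c\<in>A. n = a*b + c"
proof -
  obtain a b where ab: "a\<in>A" "b\<in>A" "a*b \<le> n - L - 1" "n - L - 1 < a*b + 2*bt"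
    using prod_cover[of "n - L - 1"] assms bt_pos by force
  have "n - a*b \<in> A" using ab assms L_lt by (intro Aint) auto
  then show ?thesis using ab assms by (intro bexI[of _ a] bexI[of _ b] bexI[of _ "n - a*b"]) auto
qed

end


definition bet :: "nat \<Rightarrow> nat" where "bet k = 2^(7^k)"
definition Lo :: "nat \<Rightarrow> nat" where "Lo k = (case k of 0 \<Rightarrow> 0 | Suc j \<Rightarrow> (bet j)^3)"
definition Nk :: "nat \<Rightarrow> nat set" where
  "Nk k = {Lo k<..4*bet k} \<union> (\<Union>i\<le>7^k. {2^i*bet k..<2^i*(bet k+1)})"
definition Aset :: "nat set" where "Aset = insert 0 (\<Union>k. Nk k)"

lemma bet_ge2: "bet k \<ge> 2"
proof -
  have "(2::nat)^1 \<le> 2^(7^k)" by (intro power_increasing) auto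
  then show ?thesis unfolding bet_def by simp
qed

lemma bet_gt: "k < bet k"
proof -
  have "k < 2^k" by (rule less_exp)
  also have "(2::nat)^k \<le> 2^(7^k)"
    by (intro power_increasing) (auto intro: order.trans[OF less_imp_le[OF less_exp]] simp: power_increasing)
  finally show ?thesis unfolding bet_def .
qed

lemma Lo_bound: "(Lo k + 1)^2 \<le> bet k"
proof (cases k)
  case 0
  then show ?thesis using bet_ge2[of 0] by (simp add: Lo_def)
next
  case (Suc j)
  define x :: nat where "x = 2^(3*7^j)"
  have xb: "(bet j)^3 = x" unfolding x_def bet_def by (simp add: power_mult[symmetric] mult.commute)
  have "(2::nat)^3 \<le> 2^(3*7^j)" by (intro power_increasing) auto
  then have x8: "x \<ge> 8" unfolding x_def by simp
  have "3*x \<le> x*x" using x8 by (intro mult_le_mono1) simp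
  then have "2*x+1 \<le> x*x" using x8 by linarith
  then have "(x+1)^2 \<le> 2*x^2" by (simp add: power2_eq_square algebra_simps)
  also have "2*x^2 = 2^(6*7^j+1)" unfolding x_def
    by (simp add: power_mult[symmetric] power_add)
  also have "\<dots> \<le> 2^(7^k)" using Suc by (intro power_increasing) auto
  finally show ?thesis using xb Suc by (simp add: Lo_def bet_def)
qed

lemma Lo_lt_bet: "Lo k < bet k"
proof -
  have "Lo k + 1 \<le> (Lo k+1)^2" by (simp add: power2_eq_square)
  then show ?thesis using Lo_bound[of k] by linarith
qed

lemma bet_cube: "4 * bet k \<le> bet k ^ 3" "bet k * (bet k + 1) \<le> bet k ^ 3"
proof -
  have b2: "bet k \<ge> 2" by (rule bet_ge2)
  have "2*2 \<le> bet k * bet k" using b2 by (intro mult_le_mono) auto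
  then have "4 * bet k \<le> bet k * bet k * bet k" by (intro mult_le_mono1) simp
  then show "4 * bet k \<le> bet k ^ 3" by (simp add: power3_eq_cube)
  have "2 * bet k \<le> bet k * bet k" using b2 by (intro mult_le_mono1) simp
  then have "bet k + 1 \<le> bet k * bet k" using b2 by linarith
  then have "bet k * (bet k + 1) \<le> bet k * (bet k * bet k)" by (rule mult_le_mono2)
  then show "bet k * (bet k + 1) \<le> bet k ^ 3" by (simp add: power3_eq_cube)
qed

lemma Lo_Suc: "Lo (Suc k) = bet k ^ 3" by (simp add: Lo_def)

lemma Nk_range: "x \<in> Nk k \<Longrightarrow> Lo k < x \<and> x \<le> Lo (Suc k)"
proof -
  assume "x \<in> Nk k"
  then consider "Lo k < x" "x \<le> 4*bet k" | i where "i \<le> 7^k" "2^i*bet k \<le> x" "x < 2^i*(bet k+1)"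
    unfolding Nk_def by auto
  then show ?thesis
  proof cases
    case 1 then show ?thesis using bet_cube[of k] by (simp add: Lo_Suc)
  next
    case 2
    have "bet k \<le> 2^i * bet k" by simp
    then have "Lo k < x" using 2 Lo_lt_bet[of k] by linarith
    moreover have "2^i*(bet k+1) \<le> 2^(7^k)*(bet k + 1)" using 2 by (intro mult_le_mono1 power_increasing) auto
    then have "x < bet k * (bet k + 1)" using 2 by (simp add: bet_def)
    ultimately show ?thesis using bet_cube(2)[of k] by (simp add: Lo_Suc)
  qed
qed

lemma Lo_smono: "strict_mono Lo"
proof (rule strict_monoI_Suc)
  fix k show "Lo k < Lo (Suc k)" using Lo_lt_bet[of k] bet_cube(1)[of k] by (simp add: Lo_Suc)
qed

lemma scl_k: "scl Aset (Lo k) (bet k) (7^k)"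
proof
  show "bet k = 2^(7^k)" by (simp add: bet_def)
  show "(Lo k + 1)^2 \<le> bet k" by (rule Lo_bound)
  show "0 \<in> Aset" by (simp add: Aset_def)
  show "x \<in> Aset" if "Lo k < x" "x \<le> 4 * bet k" for x
  proof -
    have "x \<in> Nk k" using that unfolding Nk_def by simp
    then show ?thesis unfolding Aset_def by blast
  qed
  show "x \<in> Aset" if "i \<le> 7^k" "2^i*bet k \<le> x" "x < 2^i*(bet k+1)" for i x
  proof -
    have "x \<in> (\<Union>i\<le>7^k. {2^i*bet k..<2^i*(bet k+1)})" using that by auto
    then have "x \<in> Nk k" unfolding Nk_def by (rule UnI2)
    then show ?thesis unfolding Aset_def by blast
  qed
qed

lemma Aset_cover: "\<exists>a\<in>Aset. \<exists>b\<in>Aset. \<exists>c\<in>Aset. n = a*b + c"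
proof (cases "n = 0")
  case True
  then show ?thesis by (intro bexI[of _ 0]) (auto simp: Aset_def)
next
  case False
  have ex: "\<exists>k. n \<le> Lo (Suc k)"
  proof -
    have "n \<le> Lo n" using strict_mono_imp_increasing[OF Lo_smono] by simp
    also have "Lo n \<le> Lo (Suc n)" using Lo_smono by (simp add: strict_mono_less_eq)
    finally show ?thesis by blast
  qed
  define k where "k = (LEAST k. n \<le> Lo (Suc k))"
  have k1: "n \<le> Lo (Suc k)" unfolding k_def using ex by (rule LeastI_ex)
  have k2: "Lo k < n"
  proof (cases k)
    case 0 then show ?thesis using False by (simp add: Lo_def)
  next
    case (Suc j)
    then have "\<not> n \<le> Lo (Suc j)" using not_less_Least[of j "\<lambda>k. n \<le> Lo (Suc k)"] k_def by auto
    then show ?thesis using Suc by simp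
  qed
  show ?thesis using scl.cover[OF scl_k[of k] k2] k1 by (simp add: Lo_Suc)
qed

lemma sum_pow2_lt: "(\<Sum>i\<le>e. (2::nat)^i) < 2^(e+1)"
  by (induction e) auto

lemma card_bound: "card {a \<in> Aset. 1 \<le> a \<and> a \<le> bet k ^ 3} \<le> 7 * bet k"
proof -
  have sub: "{a \<in> Aset. 1 \<le> a \<and> a \<le> bet k ^ 3} \<subseteq> {1..Lo k} \<union> Nk k"
  proof
    fix a assume a: "a \<in> {a \<in> Aset. 1 \<le> a \<and> a \<le> bet k ^ 3}"
    show "a \<in> {1..Lo k} \<union> Nk k"
    proof (cases "a \<le> Lo k")
      case True then show ?thesis using a by auto
    next
      case False
      from a obtain j where j: "a \<in> Nk j" unfolding Aset_def by auto
      have "j = k"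
      proof (rule ccontr)
        assume "j \<noteq> k"
        then consider "j < k" | "k < j" by linarith
        then show False
        proof cases
          case 1
          then have "Suc j \<le> k" by simp
          then have "Lo (Suc j) \<le> Lo k" using Lo_smono by (simp add: strict_mono_less_eq)
          then show False using Nk_range[OF j] False by simp
        next
          case 2
          then have "Suc k \<le> j" by simp
          then have "Lo (Suc k) \<le> Lo j" using Lo_smono by (simp add: strict_mono_less_eq)
          then show False using Nk_range[OF j] a by (simp add: Lo_Suc)
        qed
      qed
      then show ?thesis using j by simp
    qed
  qed
  have c1: "card (\<Union>i\<le>7^k. {2^i*bet k..<2^i*(bet k+1)}) \<le> (\<Sum>i\<le>7^k. card {2^i*bet k..<2^i*(bet k+1)})"
    by (rule card_UN_le) simp
  also have "\<dots> = (\<Sum>i\<le>7^k. 2^i)" by (simp add: algebra_simps)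
  also have "\<dots> < 2^(7^k+1)" by (rule sum_pow2_lt)
  also have "\<dots> = 2 * bet k" by (simp add: bet_def)
  finally have c1': "card (\<Union>i\<le>7^k. {2^i*bet k..<2^i*(bet k+1)}) \<le> 2 * bet k" by simp
  have "card (Nk k) \<le> card {Lo k<..4*bet k} + card (\<Union>i\<le>7^k. {2^i*bet k..<2^i*(bet k+1)})"
    unfolding Nk_def by (rule card_Un_le)
  also have "\<dots> \<le> 4 * bet k + 2 * bet k" using c1' by simp
  finally have cN: "card (Nk k) \<le> 6 * bet k" by simp
  have fN: "finite (Nk k)" unfolding Nk_def by auto
  have "card {a \<in> Aset. 1 \<le> a \<and> a \<le> bet k ^ 3} \<le> card ({1..Lo k} \<union> Nk k)"
    using sub fN by (intro card_mono) auto
  also have "\<dots> \<le> card {1..Lo k} + card (Nk k)" by (rule card_Un_le)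
  also have "\<dots> \<le> Lo k + 6 * bet k" using cN by simp
  also have "\<dots> \<le> 7 * bet k" using Lo_lt_bet[of k] by simp
  finally show ?thesis .
qed


lemma ratio_bound:
  "real (counting Aset (real (bet k ^ 3))) / (real (bet k ^ 3) * ln (real (bet k ^ 3))) powr (1/3) \<le> 7"
proof -
  define b where "b = real (bet k)"
  have b2: "b \<ge> 2" unfolding b_def using bet_ge2[of k] by simp
  have cnt: "counting Aset (real (bet k ^ 3)) = card {a \<in> Aset. 1 \<le> a \<and> a \<le> bet k ^ 3}"
    unfolding counting_def by (simp only: of_nat_le_iff)
  have cb: "real (counting Aset (real (bet k ^ 3))) \<le> 7 * b"
    unfolding cnt b_def using card_bound[of k] by (simp del: of_nat_power)
  define X where "X = real (bet k ^ 3)"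
  have Xb: "X = b^3" unfolding X_def b_def by simp
  have "(2::real)^3 \<le> b^3" using b2 by (intro power_mono) auto
  then have X8: "X \<ge> 8" using Xb by simp
  have lnX: "ln X \<ge> 1" using X8 exp_le by (subst ln_ge_iff) auto
  have "X \<le> X * ln X" using lnX X8 by (simp add: mult_le_cancel_left1)
  then have "X powr (1/3) \<le> (X * ln X) powr (1/3)" using X8 by (intro powr_mono2) auto
  moreover have "X powr (1/3) = b"
  proof -
    have "b powr 3 = b^3" using b2 by (simp add: powr_numeral)
    then have "X = b powr 3" using Xb by simp
    then have "X powr (1/3) = b powr (3 * (1/3))" by (simp only: powr_powr)
    then show ?thesis using b2 by simp
  qed
  ultimately have D: "b \<le> (X * ln X) powr (1/3)" by simp
  have "real (counting Aset X) / (X * ln X) powr (1/3) \<le> real (counting Aset X) / b"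
  proof -
    have "0 < (X * ln X) powr (1/3) * b" using D b2 by (intro mult_pos_pos) auto
    then show ?thesis using D b2 by (intro divide_left_mono) auto
  qed
  also have "\<dots> \<le> 7 * b / b" using cb b2 X_def by (intro divide_right_mono) auto
  also have "\<dots> = 7" using b2 by simp
  finally show ?thesis unfolding X_def .
qed

theorem corollary3p3:
  shows "\<exists>A :: nat set. infinite A \<and> sumset (prodset A) A = UNIV \<and>
     Liminf at_top (\<lambda>X::real. ereal (real (counting A X) / (X * ln X) powr (1/3))) < \<infinity>"
proof (intro exI[of _ Aset] conjI)
  show "infinite Aset"
    unfolding infinite_nat_iff_unbounded
  proof
    fix m
    have "bet m \<in> Nk m" unfolding Nk_def using Lo_lt_bet[of m] by auto
    then show "\<exists>n>m. n \<in> Aset" using bet_gt[of m] unfolding Aset_def by blast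
  qed
  show "sumset (prodset Aset) Aset = UNIV"
  proof -
    have "n \<in> sumset (prodset Aset) Aset" for n
    proof -
      obtain a b c where "a \<in> Aset" "b \<in> Aset" "c \<in> Aset" "n = a*b + c" using Aset_cover[of n] by blast
      then show ?thesis unfolding sumset_def prodset_def by blast
    qed
    then show ?thesis by blast
  qed
  let ?f = "\<lambda>X::real. ereal (real (counting Aset X) / (X * ln X) powr (1/3))"
  have "Liminf at_top ?f \<le> ereal 7"
    unfolding Liminf_def
  proof (rule SUP_least)
    fix P :: "real \<Rightarrow> bool" assume "P \<in> {P. eventually P at_top}"
    then have "eventually P at_top" by simp
    then have "\<exists>N. \<forall>X\<ge>N. P X" by (simp only: eventually_at_top_linorder)
    then obtain N where N: "\<And>X. X \<ge> N \<Longrightarrow> P X" by blast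
    define k where "k = nat \<lceil>N\<rceil>"
    have "N \<le> real k" unfolding k_def by linarith
    also have "real k \<le> real (bet k)" using bet_gt[of k] by simp
    also have "real (bet k) \<le> real (bet k ^ 3)"
    proof -
      have "bet k * 1 \<le> bet k * (bet k * bet k)" using bet_ge2[of k] by (intro mult_le_mono2) simp
      then have "bet k \<le> bet k ^ 3" by (simp add: power3_eq_cube)
      then show ?thesis by (simp only: of_nat_le_iff)
    qed
    finally have "N \<le> real (bet k ^ 3)" .
    then have "real (bet k ^ 3) \<in> {x. P x}" using N by simp
    moreover have "?f (real (bet k ^ 3)) \<le> ereal 7" using ratio_bound[of k] by (simp only: ereal_less_eq)
    ultimately show "(INF x\<in>{x. P x}. ?f x) \<le> ereal 7"
      by (rule INF_lower2)
  qed
  moreover have "ereal 7 < \<infinity>" by simp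
  ultimately show "Liminf at_top ?f < \<infinity>" by (rule le_less_trans)
qed

end
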